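(* Let $A=(a_{i,j})_{i,j=0}^1$ be a $2\times2$ matrix with entries in a commutative ring, and for $n\ge0$ let $A^{\{n\}}=(a^{\{n\}}_{i,j})_{i,j=0}^n$ be its second kind $n$-th Kronecker power. Use the convention that $a^{\{m\}}_{i,j}=0$ whenever an index $i$ or $j$ lies outside $\{0,\dots,m\}$. Then for $n\ge1$ and $0\le j\le n$: Recurrence I: $a^{\{n\}}_{i,j}=a_{0,0}a^{\{n-1\}}_{i,j}+a_{0,1}a^{\{n-1\}}_{i,j-1}$ for $0\le i\le n-1$, and $a^{\{n\}}_{n,j}=a_{1,0}a^{\{n-1\}}_{n-1,j}+a_{1,1}a^{\{n-1\}}_{n-1,j-1}$. Recurrence II: $a^{\{n\}}_{0,j}=a_{0,0}a^{\{n-1\}}_{0,j}+a_{0,1}a^{\{n-1\}}_{0,j-1}$, and $a^{\{n\}}_{i,j}=a_{1,0}a^{\{n-1\}}_{i-1,j}+a_{1,1}a^{\{n-1\}}_{i-1,j-1}$ for $1\le i\le n$. In matrix form, with $L^0_{n-1}=(I_n\mid 0)$ and $L^1_{n-1}=(0\mid I_n)$ the $n\times(n+1)$ matrices obtained by appending a zero column on the right, resp. on the left, of $I_n$: $$A^{\{n\}}=\begin{pmatrix}a_{0,0}I_n\\ (0,\dots,0,a_{1,0})\end{pmatrix}A^{\{n-1\}}L^0_{n-1}+\begin{pmatrix}a_{0,1}I_n\\ (0,\dots,0,a_{1,1})\end{pmatrix}A^{\{n-1\}}L^1_{n-1},$$ $$A^{\{n\}}=\begin{pmatrix}(a_{0,0},0,\dots,0)\\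 a_{1,0}I_n\end{pmatrix}A^{\{n-1\}}L^0_{n-1}+\begin{pmatrix}(a_{0,1},0,\dots,0)\\ a_{1,1}I_n\end{pmatrix}A^{\{n-1\}}L^1_{n-1},$$ where the left factors are $(n+1)\times n$ matrices.
   Context: Second kind Kronecker power: for $A=(a_{i,j})_{i,j=0}^1$ and the linear substitution $z_1=a_{0,0}t_1+a_{0,1}t_2$, $z_2=a_{1,0}t_1+a_{1,1}t_2$, the matrix $A^{\{n\}}=(a^{\{n\}}_{i,j})_{i,j=0}^n$ is defined by $z_1^{n-i}z_2^{i}=\sum_{j=0}^n a^{\{n\}}_{i,j}\,t_1^{n-j}t_2^{j}$ for $0\le i\le n$; $A^{\{0\}}=1$, $A^{\{1\}}=A$. Explicitly $a^{\{n\}}_{i,j}=\sum_{k=0}^j\binom{n-i}{k}\binom{i}{j-k}a_{0,0}^{n-i-k}a_{0,1}^{k}a_{1,0}^{i-j+k}a_{1,1}^{j-k}$, with $\binom{m}{l}=0$ if $m<l$. *)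

theory Defs
  imports Main "Jordan_Normal_Form.Matrix"
begin

text \<open>Entries of the second kind n-th Kronecker power of a 2x2 matrix A, given by the
explicit formula; indices are integers and the entry is 0 whenever an index lies
outside {0..n}.\<close>
definition skp :: "'a::comm_ring_1 mat \<Rightarrow> nat \<Rightarrow> int \<Rightarrow> int \<Rightarrow> 'a" where
  "skp A n i j =
    (if 0 \<le> i \<and> i \<le> int n \<and> 0 \<le> j \<and> j \<le> int n then
       (\<Sum>k = 0..nat j. of_nat ((n - nat i) choose k) * of_nat (nat i choose (nat j - k))
          * A $$ (0,0) ^ (n - nat i - k) * A $$ (0,1) ^ k
          * A $$ (1,0) ^ (nat i + k - nat j) * A $$ (1,1) ^ (nat j - k))
     else 0)"

definition skp_mat :: "'a::comm_ring_1 mat \<Rightarrow> nat \<Rightarrow> 'a mat" where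
  "skp_mat A n = mat (Suc n) (Suc n) (\<lambda>(i,j). skp A n (int i) (int j))"

text \<open>L^0_{n-1} = (I_n | 0) and L^1_{n-1} = (0 | I_n), both n x (n+1).\<close>
definition L0 :: "nat \<Rightarrow> 'a::comm_ring_1 mat" where
  "L0 n = mat n (Suc n) (\<lambda>(i,j). if j = i then 1 else 0)"
definition L1 :: "nat \<Rightarrow> 'a::comm_ring_1 mat" where
  "L1 n = mat n (Suc n) (\<lambda>(i,j). if j = Suc i then 1 else 0)"

definition top_block :: "nat \<Rightarrow> 'a::comm_ring_1 \<Rightarrow> 'a \<Rightarrow> 'a mat" where
  "top_block n c d = mat (Suc n) n
     (\<lambda>(i,j). if i < n then (if i = j then c else 0) else (if Suc j = n then d else 0))"

definition bot_block :: "nat \<Rightarrow> 'a::comm_ring_1 \<Rightarrow> 'a \<Rightarrow> 'a mat" where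
  "bot_block n c d = mat (Suc n) n
     (\<lambda>(i,j). if i = 0 then (if j = 0 then c else 0) else (if i = Suc j then d else 0))"

end

theory Submission imports Defs "HOL-Computational_Algebra.Polynomial" begin

lemma coeff_lin_mult:
  "coeff ([:a,b:] * p) j = a * coeff p j + (if j = 0 then 0 else b * coeff p (j - 1))"
  by (cases j) (simp_all add: mult_pCons_left)

lemma coeff_lin_power:
  "coeff ([:a,b:] ^ m) k = of_nat (m choose k) * a ^ (m - k) * (b::'a::comm_ring_1) ^ k"
proof (induction m arbitrary: k)
  case 0
  then show ?case by (cases k) simp_all
next
  case (Suc m)
  show ?case
  proof (cases k)
    case 0
    then show ?thesis using Suc by (simp add: coeff_lin_mult)
  next
    case (Suc k')
    have e: "coeff ([:a,b:] ^ Suc m) k = a * (of_nat (m choose k) * a ^ (m - k) * b ^ k)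
        + b * (of_nat (m choose k') * a ^ (m - k') * b ^ k')"
      using Suc.IH Suc by (simp add: coeff_lin_mult)
    show ?thesis
    proof (cases "k' < m")
      case True
      then have "m - k' = Suc (m - k)" using Suc by simp
      then show ?thesis using e Suc by (simp add: algebra_simps)
    next
      case False
      show ?thesis
      proof (cases "k' = m")
        case True
        then show ?thesis using e Suc by (simp add: binomial_eq_0)
      next
        case False
        then show ?thesis using e Suc \<open>\<not> k' < m\<close> by (simp add: binomial_eq_0)
      qed
    qed
  qed
qed

definition PP :: "'a::comm_ring_1 mat \<Rightarrow> nat \<Rightarrow> nat \<Rightarrow> 'a poly" where
  "PP A m i = [:A $$ (0,0), A $$ (0,1):] ^ m * [:A $$ (1,0), A $$ (1,1):] ^ i"

lemma skp_coeff:
  assumes "i \<le> n"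
  shows "skp A n (int i) (int j) = coeff (PP A (n - i) i) j"
proof (cases "j \<le> n")
  case True
  have "coeff (PP A (n - i) i) j = (\<Sum>k\<le>j. coeff ([:A $$ (0,0), A $$ (0,1):] ^ (n-i)) k
        * coeff ([:A $$ (1,0), A $$ (1,1):] ^ i) (j - k))"
    unfolding PP_def by (rule coeff_mult)
  also have "\<dots> = (\<Sum>k = 0..j. of_nat ((n - i) choose k) * of_nat (i choose (j - k))
          * A $$ (0,0) ^ (n - i - k) * A $$ (0,1) ^ k
          * A $$ (1,0) ^ (i + k - j) * A $$ (1,1) ^ (j - k))"
    unfolding atLeast0AtMost
  proof (rule sum.cong[OF refl])
    fix k assume "k \<in> {..j}"
    show "coeff ([:A $$ (0,0), A $$ (0,1):] ^ (n-i)) k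
        * coeff ([:A $$ (1,0), A $$ (1,1):] ^ i) (j - k) = of_nat ((n - i) choose k) * of_nat (i choose (j - k))
          * A $$ (0,0) ^ (n - i - k) * A $$ (0,1) ^ k
          * A $$ (1,0) ^ (i + k - j) * A $$ (1,1) ^ (j - k)"
    proof (cases "j - k \<le> i")
      case True
      then have "i - (j - k) = i + k - j" using \<open>k \<in> {..j}\<close> by auto
      then show ?thesis by (simp add: coeff_lin_power algebra_simps)
    next
      case False
      then show ?thesis by (simp add: coeff_lin_power binomial_eq_0)
    qed
  qed
  finally show ?thesis using True assms unfolding skp_def by simp
next
  case False
  have "degree (PP A (n - i) i) \<le> degree ([:A $$ (0,0), A $$ (0,1):] ^ (n-i))
      + degree ([:A $$ (1,0), A $$ (1,1):] ^ i)"
    unfolding PP_def by (rule degree_mult_le)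
  also have "\<dots> \<le> 1 * (n - i) + 1 * i"
    by (intro add_mono order.trans[OF degree_power_le] mult_right_mono) auto
  also have "\<dots> = n" using assms by simp
  finally have "coeff (PP A (n - i) i) j = 0" using False by (intro coeff_eq_0) simp
  then show ?thesis using False unfolding skp_def by simp
qed

lemma skp_neg: "j < 0 \<Longrightarrow> skp A n i j = 0" "i < 0 \<Longrightarrow> skp A n i j = 0"
  by (auto simp: skp_def)

lemma skp_coeff_m1:
  assumes "i \<le> n"
  shows "skp A n (int i) (int j - 1) = (if j = 0 then 0 else coeff (PP A (n - i) i) (j - 1))"
proof (cases j)
  case 0 then show ?thesis by (simp add: skp_def)
next
  case (Suc j')
  then have "int j - 1 = int j'" by simp
  then show ?thesis using skp_coeff[OF assms, of A j'] Suc by simp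
qed

lemma recI:
  assumes "i < n"
  shows "skp A n (int i) (int j) = A $$ (0,0) * skp A (n-1) (int i) (int j)
        + A $$ (0,1) * skp A (n-1) (int i) (int j - 1)"
proof -
  have e: "n - i = Suc (n - 1 - i)" using assms by simp
  have "PP A (n - i) i = [:A $$ (0,0), A $$ (0,1):] * PP A (n - 1 - i) i"
    unfolding PP_def e power_Suc by (simp only: mult.assoc)
  then have "skp A n (int i) (int j) = coeff ([:A $$ (0,0), A $$ (0,1):] * PP A (n - 1 - i) i) j"
    using assms by (simp add: skp_coeff)
  also have "\<dots> = A $$ (0,0) * skp A (n-1) (int i) (int j)
        + A $$ (0,1) * skp A (n-1) (int i) (int j - 1)"
    unfolding coeff_lin_mult using assms by (simp add: skp_coeff skp_coeff_m1)
  finally show ?thesis .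
qed

lemma recII:
  assumes "0 < i" "i \<le> n"
  shows "skp A n (int i) (int j) = A $$ (1,0) * skp A (n-1) (int i - 1) (int j)
        + A $$ (1,1) * skp A (n-1) (int i - 1) (int j - 1)"
proof -
  obtain i' where i': "i = Suc i'" using assms by (cases i) auto
  have e: "n - i = n - 1 - i'" using i' by simp
  have "PP A (n - i) i = [:A $$ (1,0), A $$ (1,1):] * PP A (n - 1 - i') i'"
    unfolding PP_def e unfolding i' power_Suc by (simp only: mult.assoc mult.left_commute)
  then have "skp A n (int i) (int j) = coeff ([:A $$ (1,0), A $$ (1,1):] * PP A (n - 1 - i') i') j"
    using assms by (simp add: skp_coeff)
  also have "\<dots> = A $$ (1,0) * skp A (n-1) (int i') (int j)
        + A $$ (1,1) * skp A (n-1) (int i') (int j - 1)"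
    unfolding coeff_lin_mult using assms i' by (simp add: skp_coeff skp_coeff_m1)
  also have "int i' = int i - 1" using i' by simp
  finally show ?thesis .
qed


lemma SL0:
  assumes "n \<ge> 1"
  shows "skp_mat A (n-1) * L0 n = mat n (Suc n) (\<lambda>(l,j). skp A (n-1) (int l) (int j))"
proof (rule eq_matI)
  fix l j assume lj: "l < dim_row (mat n (Suc n) (\<lambda>(l,j). skp A (n-1) (int l) (int j)))"
     "j < dim_col (mat n (Suc n) (\<lambda>(l,j). skp A (n-1) (int l) (int j)))"
  have "(skp_mat A (n-1) * L0 n) $$ (l,j) = (\<Sum>k<n. skp A (n-1) (int l) (int k) * (if j = k then 1 else 0))"
    using lj assms by (simp add: skp_mat_def L0_def scalar_prod_def atLeast0LessThan)
  also have "\<dots> = (if j < n then skp A (n-1) (int l) (int j) else 0)"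
    by (simp add: if_distrib cong: if_cong)
  also have "\<dots> = skp A (n-1) (int l) (int j)"
    using lj assms by (auto simp: skp_def)
  finally show "(skp_mat A (n-1) * L0 n) $$ (l,j) = mat n (Suc n) (\<lambda>(l,j). skp A (n-1) (int l) (int j)) $$ (l,j)"
    using lj by simp
qed (use assms in \<open>auto simp: skp_mat_def L0_def\<close>)

lemma SL1:
  assumes "n \<ge> 1"
  shows "skp_mat A (n-1) * L1 n = mat n (Suc n) (\<lambda>(l,j). skp A (n-1) (int l) (int j - 1))"
proof (rule eq_matI)
  fix l j assume lj: "l < dim_row (mat n (Suc n) (\<lambda>(l,j). skp A (n-1) (int l) (int j - 1)))"
     "j < dim_col (mat n (Suc n) (\<lambda>(l,j). skp A (n-1) (int l) (int j - 1)))"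
  have "(skp_mat A (n-1) * L1 n) $$ (l,j) = (\<Sum>k<n. skp A (n-1) (int l) (int k) * (if j = Suc k then 1 else 0))"
    using lj assms by (simp add: skp_mat_def L1_def scalar_prod_def atLeast0LessThan)
  also have "\<dots> = (if j \<ge> 1 then skp A (n-1) (int l) (int (j - 1)) else 0)"
  proof (cases j)
    case 0 then show ?thesis by simp
  next
    case (Suc j')
    then show ?thesis using lj by (simp add: if_distrib cong: if_cong)
  qed
  also have "\<dots> = skp A (n-1) (int l) (int j - 1)"
    using lj assms by (auto simp: skp_def of_nat_diff)
  finally show "(skp_mat A (n-1) * L1 n) $$ (l,j) = mat n (Suc n) (\<lambda>(l,j). skp A (n-1) (int l) (int j - 1)) $$ (l,j)"
    using lj by simp
qed (use assms in \<open>auto simp: skp_mat_def L1_def\<close>)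

lemma if_times0: "(if P then a else 0) * (b::'a::comm_ring_1) = (if P then a * b else 0)"
  by simp

lemma top_mult:
  "top_block n c d * mat n m f = mat (Suc n) m (\<lambda>(i,j). if i < n then c * f (i,j) else if n = 0 then 0 else d * f (n-1, j))"
proof (rule eq_matI)
  fix i j assume ij: "i < dim_row (mat (Suc n) m (\<lambda>(i,j). if i < n then c * f (i,j) else if n = 0 then 0 else d * f (n-1, j)))"
    "j < dim_col (mat (Suc n) m (\<lambda>(i,j). if i < n then c * f (i,j) else if n = 0 then 0 else d * f (n-1, j)))"
  show "(top_block n c d * mat n m f) $$ (i,j) = mat (Suc n) m (\<lambda>(i,j). if i < n then c * f (i,j) else if n = 0 then 0 else d * f (n-1, j)) $$ (i,j)"
  proof (cases "i < n")
    case True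
    then show ?thesis using ij
      by (simp add: top_block_def scalar_prod_def atLeast0LessThan if_times0)
  next
    case False
    then have "i = n" using ij by simp
    then show ?thesis using ij
      by (cases n) (simp_all add: top_block_def scalar_prod_def atLeast0LessThan if_distrib cong: if_cong)
  qed
qed (auto simp: top_block_def)

lemma bot_mult:
  "bot_block n c d * mat n m f = mat (Suc n) m (\<lambda>(i,j). if i = 0 then (if n = 0 then 0 else c * f (0,j)) else d * f (i-1, j))"
proof (rule eq_matI)
  fix i j assume ij: "i < dim_row (mat (Suc n) m (\<lambda>(i,j). if i = 0 then (if n = 0 then 0 else c * f (0,j)) else d * f (i-1, j)))"
    "j < dim_col (mat (Suc n) m (\<lambda>(i,j). if i = 0 then (if n = 0 then 0 else c * f (0,j)) else d * f (i-1, j)))"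
  show "(bot_block n c d * mat n m f) $$ (i,j) = mat (Suc n) m (\<lambda>(i,j). if i = 0 then (if n = 0 then 0 else c * f (0,j)) else d * f (i-1, j)) $$ (i,j)"
  proof (cases i)
    case 0
    then show ?thesis using ij
      by (simp add: bot_block_def scalar_prod_def atLeast0LessThan if_times0)
  next
    case (Suc i')
    then show ?thesis using ij
      by (simp add: bot_block_def scalar_prod_def atLeast0LessThan if_times0)
  qed
qed (auto simp: bot_block_def)

theorem lemma5p1:
  fixes A :: "'a::comm_ring_1 mat" and n :: nat
  assumes "A \<in> carrier_mat 2 2" and "n \<ge> 1"
  shows
   "(\<forall>i j. 0 \<le> i \<and> i \<le> int n - 1 \<and> 0 \<le> j \<and> j \<le> int n \<longrightarrow>
        skp A n i j = A $$ (0,0) * skp A (n-1) i j + A $$ (0,1) * skp A (n-1) i (j-1))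
  \<and> (\<forall>j. 0 \<le> j \<and> j \<le> int n \<longrightarrow>
        skp A n (int n) j = A $$ (1,0) * skp A (n-1) (int n - 1) j
                          + A $$ (1,1) * skp A (n-1) (int n - 1) (j-1))
  \<and> (\<forall>j. 0 \<le> j \<and> j \<le> int n \<longrightarrow>
        skp A n 0 j = A $$ (0,0) * skp A (n-1) 0 j + A $$ (0,1) * skp A (n-1) 0 (j-1))
  \<and> (\<forall>i j. 1 \<le> i \<and> i \<le> int n \<and> 0 \<le> j \<and> j \<le> int n \<longrightarrow>
        skp A n i j = A $$ (1,0) * skp A (n-1) (i-1) j + A $$ (1,1) * skp A (n-1) (i-1) (j-1))
  \<and> skp_mat A n =
      top_block n (A $$ (0,0)) (A $$ (1,0)) * skp_mat A (n-1) * L0 n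
    + top_block n (A $$ (0,1)) (A $$ (1,1)) * skp_mat A (n-1) * L1 n
  \<and> skp_mat A n =
      bot_block n (A $$ (0,0)) (A $$ (1,0)) * skp_mat A (n-1) * L0 n
    + bot_block n (A $$ (0,1)) (A $$ (1,1)) * skp_mat A (n-1) * L1 n"
proof -
  have n1: "n \<ge> 1" by fact
  have P1: "\<forall>i j. 0 \<le> i \<and> i \<le> int n - 1 \<and> 0 \<le> j \<and> j \<le> int n \<longrightarrow>
        skp A n i j = A $$ (0,0) * skp A (n-1) i j + A $$ (0,1) * skp A (n-1) i (j-1)"
  proof (intro allI impI)
    fix i j :: int assume h: "0 \<le> i \<and> i \<le> int n - 1 \<and> 0 \<le> j \<and> j \<le> int n"
    then obtain i' j' where "i = int i'" "j = int j'" by (metis nonneg_int_cases)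
    then show "skp A n i j = A $$ (0,0) * skp A (n-1) i j + A $$ (0,1) * skp A (n-1) i (j-1)"
      using h recI[of i' n A j'] by simp
  qed
  have P4: "\<forall>i j. 1 \<le> i \<and> i \<le> int n \<and> 0 \<le> j \<and> j \<le> int n \<longrightarrow>
        skp A n i j = A $$ (1,0) * skp A (n-1) (i-1) j + A $$ (1,1) * skp A (n-1) (i-1) (j-1)"
  proof (intro allI impI)
    fix i j :: int assume h: "1 \<le> i \<and> i \<le> int n \<and> 0 \<le> j \<and> j \<le> int n"
    then obtain i' j' where "i = int i'" "j = int j'" by (metis nonneg_int_cases zero_le_one order.trans)
    then show "skp A n i j = A $$ (1,0) * skp A (n-1) (i-1) j + A $$ (1,1) * skp A (n-1) (i-1) (j-1)"
      using h recII[of i' n A j'] by simp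
  qed
  have P2: "\<forall>j. 0 \<le> j \<and> j \<le> int n \<longrightarrow>
        skp A n (int n) j = A $$ (1,0) * skp A (n-1) (int n - 1) j
                          + A $$ (1,1) * skp A (n-1) (int n - 1) (j-1)"
    using P4 n1 by auto
  have P3: "\<forall>j. 0 \<le> j \<and> j \<le> int n \<longrightarrow>
        skp A n 0 j = A $$ (0,0) * skp A (n-1) 0 j + A $$ (0,1) * skp A (n-1) 0 (j-1)"
    using P1 n1 by auto
  have dS: "skp_mat A (n-1) \<in> carrier_mat n n" using n1 by (simp add: skp_mat_def)
  have dL0: "(L0 n :: 'a mat) \<in> carrier_mat n (Suc n)" by (simp add: L0_def)
  have dL1: "(L1 n :: 'a mat) \<in> carrier_mat n (Suc n)" by (simp add: L1_def)
  have dT: "\<And>c d. (top_block n c d :: 'a mat) \<in> carrier_mat (Suc n) n" by (simp add: top_block_def)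
  have dB: "\<And>c d. (bot_block n c d :: 'a mat) \<in> carrier_mat (Suc n) n" by (simp add: bot_block_def)
  have RR: "top_block n c d * skp_mat A (n-1) * L0 n = top_block n c d * mat n (Suc n) (\<lambda>(l,j). skp A (n-1) (int l) (int j))" for c d
    by (simp only: assoc_mult_mat[OF dT dS dL0] SL0[OF n1])
  have RR1: "top_block n c d * skp_mat A (n-1) * L1 n = top_block n c d * mat n (Suc n) (\<lambda>(l,j). skp A (n-1) (int l) (int j - 1))" for c d
    by (simp only: assoc_mult_mat[OF dT dS dL1] SL1[OF n1])
  have BB: "bot_block n c d * skp_mat A (n-1) * L0 n = bot_block n c d * mat n (Suc n) (\<lambda>(l,j). skp A (n-1) (int l) (int j))" for c d
    by (simp only: assoc_mult_mat[OF dB dS dL0] SL0[OF n1])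
  have BB1: "bot_block n c d * skp_mat A (n-1) * L1 n = bot_block n c d * mat n (Suc n) (\<lambda>(l,j). skp A (n-1) (int l) (int j - 1))" for c d
    by (simp only: assoc_mult_mat[OF dB dS dL1] SL1[OF n1])
  have M1: "skp_mat A n =
      top_block n (A $$ (0,0)) (A $$ (1,0)) * skp_mat A (n-1) * L0 n
    + top_block n (A $$ (0,1)) (A $$ (1,1)) * skp_mat A (n-1) * L1 n" (is "_ = ?R")
  proof (rule eq_matI)
    fix i j assume ij0: "i < dim_row ?R" "j < dim_col ?R"
    have ij: "i < dim_row (skp_mat A n)" "j < dim_col (skp_mat A n)"
      using ij0 dL0 dL1 by (auto simp: skp_mat_def top_block_def bot_block_def)
    show "skp_mat A n $$ (i, j) = ?R $$ (i, j)"
    proof (cases "i < n")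
      case True
      then show ?thesis unfolding RR RR1 top_mult using ij recI[of i n A j] by (simp add: skp_mat_def)
    next
      case False
      then have "i = n" using ij by (simp add: skp_mat_def)
      then show ?thesis unfolding RR RR1 top_mult using ij n1 recII[of n n A j] by (simp add: skp_mat_def of_nat_diff)
    qed
  qed (auto simp: skp_mat_def top_block_def bot_block_def L0_def L1_def)
  have M2: "skp_mat A n =
      bot_block n (A $$ (0,0)) (A $$ (1,0)) * skp_mat A (n-1) * L0 n
    + bot_block n (A $$ (0,1)) (A $$ (1,1)) * skp_mat A (n-1) * L1 n" (is "_ = ?R")
  proof (rule eq_matI)
    fix i j assume ij0: "i < dim_row ?R" "j < dim_col ?R"
    have ij: "i < dim_row (skp_mat A n)" "j < dim_col (skp_mat A n)"
      using ij0 dL0 dL1 by (auto simp: skp_mat_def top_block_def bot_block_def)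
    show "skp_mat A n $$ (i, j) = ?R $$ (i, j)"
    proof (cases "i = 0")
      case True
      then show ?thesis unfolding BB BB1 bot_mult using ij n1 recI[of 0 n A j] by (simp add: skp_mat_def)
    next
      case False
      then show ?thesis unfolding BB BB1 bot_mult using ij n1 recII[of i n A j] by (simp add: skp_mat_def of_nat_diff)
    qed
  qed (auto simp: skp_mat_def top_block_def bot_block_def L0_def L1_def)
  show ?thesis using P1 P2 P3 P4 M1 M2 by blast
qed

end
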